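(* Let $G$ be a locally compact group with a compact open subgroup $H$, and let $f:G\to\mathbb C$. Then $f\in\mathcal P(G)$ if and only if there are finitely many functions $f_i,g_i,f'_j,g'_j\in C_0(G)$ such that for all $x,y\in G$: (i) $f(xy)\chi_H(y)=\sum_{i=1}^m f_i(x)g_i(y)$, and (ii) $f(y)\chi_H(xy)=\sum_{j=1}^n f'_j(x)g'_j(y)$.
   Context: $\chi_H$ is the characteristic function of $H$; $C_0(G)$ denotes continuous complex functions vanishing at infinity. $\mathcal P(G)$ is the set of $f\in C_c(G)$ such that for some compact open subgroup $K$ of $G$ there exist finitely many $f_i\in C_c(G)$ and $\phi_i\in C(K)$ with $f(xk)=\sum_i f_i(x)\phi_i(k)$ for all $x\in G,k\in K$. *)

theory Defs
  imports "HOL-Analysis.Analysis"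
begin

text \<open>The group G is an (not necessarily abelian) additively written Hausdorff topological
  group, i.e. a type of class topological_group_add and t2_space; the group product xy is
  written x + y.\<close>

definition locally_compact_group :: "'a::{topological_group_add,t2_space} itself \<Rightarrow> bool" where
  "locally_compact_group _ \<longleftrightarrow> locally_compact_space (euclidean :: 'a topology)"

definition subgroup_of :: "'a::group_add set \<Rightarrow> bool" where
  "subgroup_of H \<longleftrightarrow> 0 \<in> H \<and> (\<forall>x\<in>H. \<forall>y\<in>H. x + y \<in> H) \<and> (\<forall>x\<in>H. - x \<in> H)"

definition compact_open_subgroup :: "'a::topological_group_add set \<Rightarrow> bool" where
  "compact_open_subgroup H \<longleftrightarrow> subgroup_of H \<and> compact H \<and> open H"

definition C0 :: "('a::topological_space \<Rightarrow> complex) \<Rightarrow> bool" where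
  "C0 f \<longleftrightarrow> continuous_on UNIV f \<and> (\<forall>e>0. compact {x. norm (f x) \<ge> e})"

definition Cc :: "('a::topological_space \<Rightarrow> complex) \<Rightarrow> bool" where
  "Cc f \<longleftrightarrow> continuous_on UNIV f \<and> compact (closure {x. f x \<noteq> 0})"

definition PG :: "('a::topological_group_add \<Rightarrow> complex) \<Rightarrow> bool" where
  "PG f \<longleftrightarrow> Cc f \<and>
     (\<exists>K. compact_open_subgroup K \<and>
       (\<exists>(N::nat) (fs :: nat \<Rightarrow> 'a \<Rightarrow> complex) (\<phi> :: nat \<Rightarrow> 'a \<Rightarrow> complex).
          (\<forall>i<N. Cc (fs i) \<and> continuous_on K (\<phi> i)) \<and>
          (\<forall>x. \<forall>k\<in>K. f (x + k) = (\<Sum>i<N. fs i x * \<phi> i k))))"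

end

theory Submission
  imports Defs
begin


lemma coset_eq:
  fixes L :: "'a::group_add set"
  assumes "subgroup_of L" "y \<in> (+) h ` L"
  shows "(+) h ` L = (+) y ` L"
proof -
  from assms(2) obtain l where l: "l \<in> L" "y = h + l" by auto
  have sg: "\<And>a b. a \<in> L \<Longrightarrow> b \<in> L \<Longrightarrow> a + b \<in> L" "\<And>a. a \<in> L \<Longrightarrow> - a \<in> L"
    using assms(1) unfolding subgroup_of_def by auto
  show ?thesis
  proof
    show "(+) h ` L \<subseteq> (+) y ` L"
    proof
      fix z assume "z \<in> (+) h ` L"
      then obtain l' where "l' \<in> L" "z = h + l'" by auto
      then have "z = y + (- l + l')" using l by (simp add: add.assoc)
      moreover have "- l + l' \<in> L" using sg \<open>l' \<in> L\<close> l by auto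
      ultimately show "z \<in> (+) y ` L" by auto
    qed
  next
    show "(+) y ` L \<subseteq> (+) h ` L"
    proof
      fix z assume "z \<in> (+) y ` L"
      then obtain l' where "l' \<in> L" "z = y + l'" by auto
      then have "z = h + (l + l')" using l by (simp add: add.assoc)
      moreover have "l + l' \<in> L" using sg \<open>l' \<in> L\<close> l by auto
      ultimately show "z \<in> (+) h ` L" by auto
    qed
  qed
qed

lemma coset_compact:
  fixes L :: "'a::topological_group_add set"
  assumes "compact L" shows "compact ((+) h ` L)"
  by (rule compact_continuous_image[OF _ assms]) (intro continuous_intros)

lemma coset_open:
  fixes L :: "'a::topological_group_add set"
  assumes "open L" shows "open ((+) h ` L)"
proof -
  have "(+) h ` L = (\<lambda>x. - h + x) -` L"
    apply (auto simp: image_def)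
    by (metis add_minus_cancel)
  moreover have "open ((\<lambda>x. - h + x) -` L)"
    by (rule open_vimage[OF assms]) (intro continuous_intros)
  ultimately show ?thesis by simp
qed

lemma Cc_intro:
  fixes f :: "'a::t2_space \<Rightarrow> complex"
  assumes "continuous_on UNIV f" "compact S" "{x. f x \<noteq> 0} \<subseteq> S"
  shows "Cc f"
proof -
  have "closed S" using assms(2) by (rule compact_imp_closed)
  then have "closure {x. f x \<noteq> 0} \<subseteq> S" using assms(3) by (rule closure_minimal[rotated])
  then have "closure {x. f x \<noteq> 0} = S \<inter> closure {x. f x \<noteq> 0}" by auto
  then have "compact (closure {x. f x \<noteq> 0})" using assms(2) by (metis closed_closure compact_Int_closed)
  then show ?thesis using assms(1) unfolding Cc_def by simp
qed

lemma Cc_C0: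
  fixes f :: "'a::t2_space \<Rightarrow> complex"
  assumes "Cc f" shows "C0 f"
proof -
  have c: "continuous_on UNIV f" and k: "compact (closure {x. f x \<noteq> 0})" using assms by (auto simp: Cc_def)
  show ?thesis unfolding C0_def
  proof (intro conjI c allI impI)
    fix e :: real assume "e > 0"
    have cl: "closed {x. e \<le> norm (f x)}"
      by (rule closed_Collect_le) (auto intro!: continuous_intros c)
    have "{x. e \<le> norm (f x)} \<subseteq> closure {x. f x \<noteq> 0}" using \<open>e>0\<close> closure_subset by fastforce
    then have "{x. e \<le> norm (f x)} = closure {x. f x \<noteq> 0} \<inter> {x. e \<le> norm (f x)}" by auto
    then show "compact {x. e \<le> norm (f x)}" using k cl by (metis compact_Int_closed)
  qed
qed

lemma ind_cont:
  fixes g :: "'a::topological_space \<Rightarrow> complex"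
  assumes "open S" "closed S" "continuous_on S g"
  shows "continuous_on UNIV (\<lambda>x. g x * indicator S x)"
proof -
  have "continuous_on (S \<union> - S) (\<lambda>x. if x \<in> S then g x else 0)"
    by (rule continuous_on_cases) (use assms in auto)
  moreover have eq: "(\<lambda>x. g x * indicator S x) = (\<lambda>x. if x \<in> S then g x else 0)"
    by (auto simp: indicator_def)
  moreover have "S \<union> - S = UNIV" by auto
  ultimately show ?thesis by (simp only: eq)
qed

lemma Cc_translate:
  fixes \<phi> :: "'a::{topological_group_add,t2_space} \<Rightarrow> complex"
  assumes "Cc \<phi>" shows "Cc (\<lambda>x. \<phi> (x + g))"
proof (rule Cc_intro)
  have c: "continuous_on UNIV \<phi>" and k: "compact (closure {x. \<phi> x \<noteq> 0})" using assms by (auto simp: Cc_def)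
  show "continuous_on UNIV (\<lambda>x. \<phi> (x + g))"
  proof (rule continuous_on_compose2[OF c])
    show "continuous_on UNIV (\<lambda>x. x + g)" by (intro continuous_on_add continuous_on_id continuous_on_const)
  qed auto
  show "compact ((\<lambda>z. z + - g) ` closure {x. \<phi> x \<noteq> 0})"
    by (rule compact_continuous_image[OF _ k]) (intro continuous_on_add continuous_on_id continuous_on_const)
  show "{x. \<phi> (x + g) \<noteq> 0} \<subseteq> (\<lambda>z. z + - g) ` closure {x. \<phi> x \<noteq> 0}"
  proof
    fix x assume "x \<in> {x. \<phi> (x + g) \<noteq> 0}"
    then have m: "x + g \<in> closure {x. \<phi> x \<noteq> 0}" by (intro subsetD[OF closure_subset]) simp
    have "x = (x + g) + - g" by (simp add: add.assoc)
    then show "x \<in> (\<lambda>z. z + - g) ` closure {x. \<phi> x \<noteq> 0}" using m by (rule image_eqI)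
  qed
qed

lemma reindex_tensor:
  assumes "finite A" "\<forall>a\<in>A. P (u a) \<and> Q (v a)"
  shows "\<exists>(m::nat) fs gs. (\<forall>i<m. P (fs i) \<and> Q (gs i)) \<and>
     (\<forall>x y. (\<Sum>a\<in>A. u a x * v a y) = (\<Sum>i<m. fs i x * gs i y))"
proof -
  obtain h where h: "bij_betw h {0..<card A} A" using ex_bij_betw_nat_finite[OF assms(1)] by blast
  have "\<forall>i<card A. P (u (h i)) \<and> Q (v (h i))"
    using assms(2) h by (auto simp: bij_betw_def)
  moreover have "\<forall>x y. (\<Sum>a\<in>A. u a x * v a y) = (\<Sum>i<card A. u (h i) x * v (h i) y)"
    using sum.reindex_bij_betw[OF h, of "\<lambda>a. u a _ * v a _"] by (simp add: atLeast0LessThan)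
  ultimately show ?thesis
    by (intro exI[of _ "card A"] exI[of _ "\<lambda>i. u (h i)"] exI[of _ "\<lambda>i. v (h i)"]) auto
qed

lemma rank_aux:
  fixes a b :: "nat \<Rightarrow> 'b \<Rightarrow> complex"
  assumes "finite S" "card S > n"
   "\<forall>k\<in>S. \<forall>l\<in>S. k \<noteq> l \<longrightarrow> (\<Sum>j<n. a j k * b j l) = 0"
   "\<forall>k\<in>S. (\<Sum>j<n. a j k * b j k) \<noteq> 0"
  shows False
  using assms
proof (induction n arbitrary: a S)
  case 0
  then obtain k where "k \<in> S" by (metis card.empty ex_in_conv less_irrefl)
  then show ?case using 0 by simp
next
  case (Suc n)
  show ?case
  proof (cases "\<forall>k\<in>S. a n k = 0")
    case True
    show ?thesis
      by (rule Suc.IH[of S a]) (use Suc.prems True in auto)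
  next
    case False
    then obtain k0 where k0: "k0 \<in> S" "a n k0 \<noteq> 0" by auto
    define a' where "a' j k = a j k - (a n k / a n k0) * a j k0" for j k
    have key: "(\<Sum>j<n. a' j k * b j l) =
        (\<Sum>j<Suc n. a j k * b j l) - (a n k / a n k0) * (\<Sum>j<Suc n. a j k0 * b j l)" for k l
    proof -
      have "a' n k = 0" using k0 by (simp add: a'_def)
      then have "(\<Sum>j<n. a' j k * b j l) = (\<Sum>j<Suc n. a' j k * b j l)" by simp
      also have "\<dots> = (\<Sum>j<Suc n. a j k * b j l - (a n k / a n k0) * (a j k0 * b j l))"
        by (rule sum.cong) (auto simp: a'_def algebra_simps)
      also have "\<dots> = (\<Sum>j<Suc n. a j k * b j l) - (a n k / a n k0) * (\<Sum>j<Suc n. a j k0 * b j l)"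
        by (simp only: sum_subtractf sum_distrib_left)
      finally show ?thesis .
    qed
    show ?thesis
    proof (rule Suc.IH[of "S - {k0}" a'])
      show "finite (S - {k0})" using Suc.prems by simp
      show "n < card (S - {k0})" using Suc.prems k0 by simp
      show "\<forall>k\<in>S - {k0}. \<forall>l\<in>S - {k0}. k \<noteq> l \<longrightarrow> (\<Sum>j<n. a' j k * b j l) = 0"
        using Suc.prems(3) k0 by (auto simp: key)
      show "\<forall>k\<in>S - {k0}. (\<Sum>j<n. a' j k * b j k) \<noteq> 0"
        using Suc.prems(3,4) k0 by (auto simp: key)
    qed
  qed
qed



theorem proposition3p9:
  fixes f :: "'a::{topological_group_add,t2_space} \<Rightarrow> complex"
    and H :: "'a set"
  assumes "locally_compact_group TYPE('a)"
    and "compact_open_subgroup H"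
  shows "PG f \<longleftrightarrow>
    (\<exists>(m::nat) (n::nat) (fs :: nat \<Rightarrow> 'a \<Rightarrow> complex) (gs :: nat \<Rightarrow> 'a \<Rightarrow> complex)
        (fs' :: nat \<Rightarrow> 'a \<Rightarrow> complex) (gs' :: nat \<Rightarrow> 'a \<Rightarrow> complex).
       (\<forall>i<m. C0 (fs i) \<and> C0 (gs i)) \<and> (\<forall>j<n. C0 (fs' j) \<and> C0 (gs' j)) \<and>
       (\<forall>x y. f (x + y) * indicator H y = (\<Sum>i<m. fs i x * gs i y)) \<and>
       (\<forall>x y. f y * indicator H (x + y) = (\<Sum>j<n. fs' j x * gs' j y)))"
proof -
  have Hs: "subgroup_of H" "compact H" "open H" using assms(2) by (auto simp: compact_open_subgroup_def)
  have Hcl: "closed H" using Hs(2) by (rule compact_imp_closed)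
  have sgH: "0 \<in> H" "\<And>a b. a\<in>H \<Longrightarrow> b\<in>H \<Longrightarrow> a+b\<in>H" "\<And>a. a\<in>H \<Longrightarrow> -a\<in>H"
    using Hs(1) by (auto simp: subgroup_of_def)
  have cosH: "compact ((+) h ` H)" "open ((+) h ` H)" "closed ((+) h ` H)" for h
    using coset_compact[OF Hs(2)] coset_open[OF Hs(3)] compact_imp_closed[OF coset_compact[OF Hs(2)]]
    by auto
  show ?thesis
  proof
    assume "PG f"
    then have fCc: "Cc f" and "\<exists>K. compact_open_subgroup K \<and>
       (\<exists>(N::nat) (fs :: nat \<Rightarrow> 'a \<Rightarrow> complex) (\<phi> :: nat \<Rightarrow> 'a \<Rightarrow> complex).
          (\<forall>i<N. Cc (fs i) \<and> continuous_on K (\<phi> i)) \<and>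
          (\<forall>x. \<forall>k\<in>K. f (x + k) = (\<Sum>i<N. fs i x * \<phi> i k)))"
      unfolding PG_def by auto
    then obtain K where K: "compact_open_subgroup K" and "\<exists>(N::nat) (fs :: nat \<Rightarrow> 'a \<Rightarrow> complex) (\<phi> :: nat \<Rightarrow> 'a \<Rightarrow> complex).
          (\<forall>i<N. Cc (fs i) \<and> continuous_on K (\<phi> i)) \<and>
          (\<forall>x. \<forall>k\<in>K. f (x + k) = (\<Sum>i<N. fs i x * \<phi> i k))" by blast
    then obtain N Fs \<phi> where Fs: "\<forall>i<(N::nat). Cc (Fs i) \<and> continuous_on K (\<phi> i)"
      and eq: "\<forall>x. \<forall>k\<in>K. f (x + k) = (\<Sum>i<N. Fs i x * \<phi> i k)"
      by (elim exE conjE)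
    have Ks: "subgroup_of K" "compact K" "open K" using K by (auto simp: compact_open_subgroup_def)
    define L where "L = H \<inter> K"
    have sgL: "subgroup_of L" using Hs(1) Ks(1) by (auto simp: subgroup_of_def L_def)
    have oL: "open L" by (simp add: L_def open_Int Hs(3) Ks(3))
    have cL: "compact L" unfolding L_def using Hs(2) Ks(2) compact_imp_closed by blast
    have L0: "0 \<in> L" using sgL by (simp add: subgroup_of_def)
    have LH: "L \<subseteq> H" and LK: "L \<subseteq> K" by (auto simp: L_def)
    have cover: "H \<subseteq> (\<Union>h\<in>H. (+) h ` L)"
    proof
      fix y assume "y \<in> H"
      moreover have "y \<in> (+) y ` L" using L0 by (metis add.right_neutral image_eqI)
      ultimately show "y \<in> (\<Union>h\<in>H. (+) h ` L)" by blast
    qed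
    obtain T where T: "T \<subseteq> H" "finite T" "H \<subseteq> (\<Union>h\<in>T. (+) h ` L)"
      apply (rule compactE_image[OF Hs(2), of H "\<lambda>h. (+) h ` L"])
      using coset_open[OF oL] cover by auto
    define D where "D = (\<lambda>h. (+) h ` L) ` T"
    define rep where "rep d = (SOME h. h \<in> T \<and> d = (+) h ` L)" for d
    have rep: "rep d \<in> H \<and> d = (+) (rep d) ` L" if "d \<in> D" for d
    proof -
      have "\<exists>h. h \<in> T \<and> d = (+) h ` L" using that by (auto simp: D_def)
      then have "rep d \<in> T \<and> d = (+) (rep d) ` L" unfolding rep_def by (rule someI_ex)
      then show ?thesis using T(1) by auto
    qed
    have dH: "d \<subseteq> H" if dD: "d \<in> D" for d
    proof
      fix y assume "y \<in> d"
      then obtain l where "l \<in> L" "y = rep d + l" using rep[OF dD] by auto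
      then show "y \<in> H" using sgH(2) rep[OF dD] LH by auto
    qed
    have dtop: "compact d" "open d" "closed d" if "d \<in> D" for d
      using rep[OF that] coset_compact[OF cL] coset_open[OF oL] compact_imp_closed[OF coset_compact[OF cL]]
      by metis+
    have uniqD: "d = d'" if "d \<in> D" "d' \<in> D" "y \<in> d" "y \<in> d'" for d d' y
      using coset_eq[OF sgL, of y "rep d"] coset_eq[OF sgL, of y "rep d'"] rep that by metis
    have finD: "finite D" using T(2) by (simp add: D_def)
    define u where "u a x = Fs (snd a) (x + rep (fst a))" for a x
    define v where "v a y = \<phi> (snd a) (- rep (fst a) + y) * indicator (fst a) y" for a y
    have uv: "\<forall>a\<in>D \<times> {..<N}. C0 (u a) \<and> C0 (v a)"
    proof
      fix a assume a: "a \<in> D \<times> {..<N}"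
      obtain d i where di: "a = (d, i)" "d \<in> D" "i < N" using a by auto
      have "C0 (u a)" unfolding u_def di(1) using Cc_C0[OF Cc_translate] Fs di by auto
      moreover have "C0 (v a)"
      proof -
        have "continuous_on d (\<lambda>y. \<phi> i (- rep d + y))"
        proof (rule continuous_on_compose2[of K "\<phi> i"])
          show "continuous_on K (\<phi> i)" using Fs di by auto
          show "continuous_on d (\<lambda>y. - rep d + y)" by (intro continuous_on_add continuous_on_id continuous_on_const)
          show "(\<lambda>y. - rep d + y) ` d \<subseteq> K"
          proof
            fix z assume "z \<in> (\<lambda>y. - rep d + y) ` d"
            then obtain y where "y \<in> d" "z = - rep d + y" by auto
            then obtain l where "l \<in> L" "y = rep d + l" using rep[OF di(2)] by auto
            then show "z \<in> K" using \<open>z = - rep d + y\<close> LK by (auto simp: add.assoc[symmetric])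
          qed
        qed
        then have "continuous_on UNIV (\<lambda>y. \<phi> i (- rep d + y) * indicator d y)"
          using ind_cont dtop[OF di(2)] by blast
        moreover have "{y. \<phi> i (- rep d + y) * indicator d y \<noteq> 0} \<subseteq> d" by (auto simp: indicator_def)
        ultimately have "Cc (\<lambda>y. \<phi> i (- rep d + y) * indicator d y)"
          using Cc_intro dtop[OF di(2)] by blast
        then show ?thesis unfolding v_def di(1) using Cc_C0 by auto
      qed
      ultimately show "C0 (u a) \<and> C0 (v a)" by simp
    qed
    obtain m fs gs where m: "\<forall>i<(m::nat). C0 (fs i) \<and> C0 (gs i)"
      "\<forall>x y. (\<Sum>a\<in>D \<times> {..<N}. u a x * v a y) = (\<Sum>i<m. fs i x * gs i y)"
      using reindex_tensor[OF finite_SigmaI[OF finD finite_lessThan] uv] by (elim exE conjE)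
    have part1: "f (x + y) * indicator H y = (\<Sum>i<m. fs i x * gs i y)" for x y
    proof -
      have "(\<Sum>a\<in>D \<times> {..<N}. u a x * v a y) =
          (\<Sum>d\<in>D. \<Sum>i<N. Fs i (x + rep d) * (\<phi> i (- rep d + y) * indicator d y))"
        unfolding sum.cartesian_product by (simp add: u_def v_def case_prod_beta)
      also have "\<dots> = f (x + y) * indicator H y"
      proof (cases "y \<in> H")
        case False
        then have "\<And>d. d \<in> D \<Longrightarrow> y \<notin> d" using dH by blast
        then show ?thesis using False by (simp add: indicator_def)
      next
        case True
        then obtain h where h: "h \<in> T" "y \<in> (+) h ` L" using T(3) by blast
        define d0 where "d0 = (+) h ` L"
        have d0: "d0 \<in> D" "y \<in> d0" using h by (auto simp: D_def d0_def)
        have "(\<Sum>d\<in>D. \<Sum>i<N. Fs i (x + rep d) * (\<phi> i (- rep d + y) * indicator d y)) =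
            (\<Sum>d\<in>D. if d = d0 then (\<Sum>i<N. Fs i (x + rep d) * \<phi> i (- rep d + y)) else 0)"
        proof (rule sum.cong)
          fix d assume "d \<in> D"
          show "(\<Sum>i<N. Fs i (x + rep d) * (\<phi> i (- rep d + y) * indicator d y)) =
            (if d = d0 then (\<Sum>i<N. Fs i (x + rep d) * \<phi> i (- rep d + y)) else 0)"
          proof (cases "d = d0")
            case True then show ?thesis using d0 by simp
          next
            case False
            then have "y \<notin> d" using uniqD[OF \<open>d \<in> D\<close> d0(1) _ d0(2)] by blast
            then show ?thesis using False by simp
          qed
        qed simp
        also have "\<dots> = (\<Sum>i<N. Fs i (x + rep d0) * \<phi> i (- rep d0 + y))"
          using finD d0(1) by simp
        also have "\<dots> = f ((x + rep d0) + (- rep d0 + y))"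
        proof -
          obtain l where "l \<in> L" "y = rep d0 + l" using rep[OF d0(1)] d0(2) by auto
          then have "- rep d0 + y \<in> K" using LK by (auto simp: add.assoc[symmetric])
          then show ?thesis using eq by simp
        qed
        also have "\<dots> = f (x + y)" by (simp add: add.assoc[symmetric])
        finally show ?thesis using True by simp
      qed
      finally show ?thesis using m(2) by simp
    qed
    have fc: "continuous_on UNIV f" and fk: "compact (closure {x. f x \<noteq> 0})" using fCc by (auto simp: Cc_def)
    define Sp where "Sp = closure {x. f x \<noteq> 0}"
    have cover2: "Sp \<subseteq> (\<Union>y\<in>Sp. (+) y ` H)"
    proof
      fix y assume "y \<in> Sp"
      moreover have "y \<in> (+) y ` H" using sgH(1) by (metis add.right_neutral image_eqI)
      ultimately show "y \<in> (\<Union>y\<in>Sp. (+) y ` H)" by blast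
    qed
    obtain T2 where T2: "T2 \<subseteq> Sp" "finite T2" "Sp \<subseteq> (\<Union>h\<in>T2. (+) h ` H)"
      apply (rule compactE_image[of Sp Sp "\<lambda>h. (+) h ` H"])
      using fk cosH cover2 by (auto simp: Sp_def)
    define C where "C = (\<lambda>h. (+) h ` H) ` T2"
    define rep2 where "rep2 c = (SOME h. h \<in> T2 \<and> c = (+) h ` H)" for c
    have rep2: "c = (+) (rep2 c) ` H" if "c \<in> C" for c
    proof -
      have "\<exists>h. h \<in> T2 \<and> c = (+) h ` H" using that by (auto simp: C_def)
      then have "rep2 c \<in> T2 \<and> c = (+) (rep2 c) ` H" unfolding rep2_def by (rule someI_ex)
      then show ?thesis by auto
    qed
    have ctop: "compact c" "open c" "closed c" if "c \<in> C" for c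
      using rep2[OF that] cosH by metis+
    have uniqC: "c = c'" if "c \<in> C" "c' \<in> C" "y \<in> c" "y \<in> c'" for c c' y
      using coset_eq[OF Hs(1), of y "rep2 c"] coset_eq[OF Hs(1), of y "rep2 c'"] rep2 that by metis
    have finC: "finite C" using T2(2) by (simp add: C_def)
    have indH: "Cc (indicator H :: 'a \<Rightarrow> complex)"
    proof (rule Cc_intro[OF _ Hs(2)])
      have "continuous_on UNIV (\<lambda>x. (\<lambda>_. 1::complex) x * indicator H x)"
        by (rule ind_cont[OF Hs(3) Hcl]) simp
      then show "continuous_on UNIV (indicator H :: 'a \<Rightarrow> complex)" by simp
      show "{x. (indicator H x :: complex) \<noteq> 0} \<subseteq> H" by (auto simp: indicator_def)
    qed
    define u2 where "u2 c x = (indicator H (x + rep2 c) :: complex)" for c x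
    define v2 where "v2 c y = f y * indicator c y" for c y
    have uv2: "\<forall>c\<in>C. C0 (u2 c) \<and> C0 (v2 c)"
    proof
      fix c assume c: "c \<in> C"
      have "C0 (u2 c)" unfolding u2_def using Cc_C0[OF Cc_translate[OF indH]] by simp
      moreover have "Cc (v2 c)" unfolding v2_def
      proof (rule Cc_intro[OF _ ctop(1)[OF c]])
        show "continuous_on UNIV (\<lambda>y. f y * indicator c y)"
          using ind_cont[OF ctop(2,3)[OF c] continuous_on_subset[OF fc]] by blast
        show "{y. f y * indicator c y \<noteq> 0} \<subseteq> c" by (auto simp: indicator_def)
      qed
      ultimately show "C0 (u2 c) \<and> C0 (v2 c)" using Cc_C0 by blast
    qed
    obtain n fs' gs' where n: "\<forall>j<(n::nat). C0 (fs' j) \<and> C0 (gs' j)"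
      "\<forall>x y. (\<Sum>c\<in>C. u2 c x * v2 c y) = (\<Sum>j<n. fs' j x * gs' j y)"
      using reindex_tensor[OF finC uv2] by (elim exE conjE)
    have part2: "f y * indicator H (x + y) = (\<Sum>j<n. fs' j x * gs' j y)" for x y
    proof -
      have "(\<Sum>c\<in>C. u2 c x * v2 c y) = f y * indicator H (x + y)"
      proof (cases "f y = 0")
        case True then show ?thesis by (simp add: v2_def)
      next
        case False
        then have "y \<in> Sp" unfolding Sp_def by (intro subsetD[OF closure_subset]) simp
        then obtain h where h: "h \<in> T2" "y \<in> (+) h ` H" using T2(3) by blast
        define c0 where "c0 = (+) h ` H"
        have c0: "c0 \<in> C" "y \<in> c0" using h by (auto simp: C_def c0_def)
        have "(\<Sum>c\<in>C. u2 c x * v2 c y) = (\<Sum>c\<in>C. if c = c0 then u2 c x * f y else 0)"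
        proof (rule sum.cong)
          fix c assume "c \<in> C"
          show "u2 c x * v2 c y = (if c = c0 then u2 c x * f y else 0)"
          proof (cases "c = c0")
            case True then show ?thesis using c0 by (simp add: v2_def)
          next
            case False
            then have "y \<notin> c" using uniqC[OF \<open>c \<in> C\<close> c0(1) _ c0(2)] by blast
            then show ?thesis using False by (simp add: v2_def)
          qed
        qed simp
        also have "\<dots> = u2 c0 x * f y" using finC c0(1) by simp
        also have "\<dots> = f y * indicator H (x + y)"
        proof -
          obtain h' where h': "h' \<in> H" "y = rep2 c0 + h'" using rep2[OF c0(1)] c0(2) by auto
          have xy: "x + y = (x + rep2 c0) + h'" using h' by (simp add: add.assoc)
          have xy2: "x + rep2 c0 = (x + y) + - h'" using h' by (simp add: add.assoc[symmetric])
          have "x + y \<in> H \<longleftrightarrow> x + rep2 c0 \<in> H"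
          proof
            assume a: "x + y \<in> H"
            show "x + rep2 c0 \<in> H" unfolding xy2 by (rule sgH(2)[OF a sgH(3)[OF h'(1)]])
          next
            assume a: "x + rep2 c0 \<in> H"
            show "x + y \<in> H" unfolding xy by (rule sgH(2)[OF a h'(1)])
          qed
          then show ?thesis by (simp add: u2_def indicator_def)
        qed
        finally show ?thesis .
      qed
      then show ?thesis using n(2) by simp
    qed
    show "\<exists>(m::nat) (n::nat) (fs :: nat \<Rightarrow> 'a \<Rightarrow> complex) (gs :: nat \<Rightarrow> 'a \<Rightarrow> complex)
        (fs' :: nat \<Rightarrow> 'a \<Rightarrow> complex) (gs' :: nat \<Rightarrow> 'a \<Rightarrow> complex).
       (\<forall>i<m. C0 (fs i) \<and> C0 (gs i)) \<and> (\<forall>j<n. C0 (fs' j) \<and> C0 (gs' j)) \<and>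
       (\<forall>x y. f (x + y) * indicator H y = (\<Sum>i<m. fs i x * gs i y)) \<and>
       (\<forall>x y. f y * indicator H (x + y) = (\<Sum>j<n. fs' j x * gs' j y))"
      apply (rule exI[of _ m], rule exI[of _ n], rule exI[of _ fs], rule exI[of _ gs],
          rule exI[of _ fs'], rule exI[of _ gs'])
      using m(1) n(1) part1 part2 by blast
  next
    assume "\<exists>(m::nat) (n::nat) (fs :: nat \<Rightarrow> 'a \<Rightarrow> complex) (gs :: nat \<Rightarrow> 'a \<Rightarrow> complex)
        (fs' :: nat \<Rightarrow> 'a \<Rightarrow> complex) (gs' :: nat \<Rightarrow> 'a \<Rightarrow> complex).
       (\<forall>i<m. C0 (fs i) \<and> C0 (gs i)) \<and> (\<forall>j<n. C0 (fs' j) \<and> C0 (gs' j)) \<and>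
       (\<forall>x y. f (x + y) * indicator H y = (\<Sum>i<m. fs i x * gs i y)) \<and>
       (\<forall>x y. f y * indicator H (x + y) = (\<Sum>j<n. fs' j x * gs' j y))"
    then obtain m n fs gs fs' gs' where
      m: "\<forall>i<(m::nat). C0 (fs i) \<and> C0 (gs i)" and n: "\<forall>j<(n::nat). C0 (fs' j) \<and> C0 (gs' j)"
      and e1: "\<forall>x y. f (x + y) * indicator H y = (\<Sum>i<m. fs i x * gs i y)"
      and e2: "\<forall>x y. f y * indicator H (x + y) = (\<Sum>j<n. fs' j x * gs' j y)"
      by blast
    have feq: "f y = (\<Sum>j<n. fs' j (- y) * gs' j y)" for y
      using spec[OF spec[OF e2, of "- y"], of y] sgH(1) by simp
    have fc: "continuous_on UNIV f"
    proof -
      have "continuous_on UNIV (\<lambda>y. \<Sum>j<n. fs' j (- y) * gs' j y)"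
      proof (intro continuous_on_sum continuous_on_mult)
        fix j assume j: "j \<in> {..<n}"
        show "continuous_on UNIV (gs' j)" using n j by (auto simp: C0_def)
        show "continuous_on UNIV (\<lambda>y. fs' j (- y))"
          by (rule continuous_on_compose2[of UNIV "fs' j"]) (use n j in \<open>auto simp: C0_def intro: continuous_on_minus continuous_on_id\<close>)
      qed
      then show ?thesis using feq by simp
    qed
    define C where "C = (\<lambda>y. (+) y ` H) ` {y. f y \<noteq> 0}"
    have finC: "finite C"
    proof (rule ccontr)
      assume "infinite C"
      then obtain C' where C': "C' \<subseteq> C" "finite C'" "card C' = Suc n"
        using infinite_arbitrarily_large by blast
      define r where "r c = (SOME y. f y \<noteq> 0 \<and> c = (+) y ` H)" for c
      have r: "f (r c) \<noteq> 0 \<and> c = (+) (r c) ` H" if "c \<in> C'" for c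
      proof -
        have "\<exists>y. f y \<noteq> 0 \<and> c = (+) y ` H" using that C'(1) by (auto simp: C_def)
        then show ?thesis unfolding r_def by (rule someI_ex)
      qed
      have inj: "inj_on r C'" by (rule inj_onI) (metis r)
      define S where "S = r ` C'"
      have cS: "card S = Suc n" using card_image[OF inj] C'(3) by (simp add: S_def)
      have fS: "finite S" using C'(2) by (simp add: S_def)
      have M: "(\<Sum>j<n. fs' j (- k) * gs' j l) = f l * indicator H (- k + l)" for k l
        using e2 by simp
      show False
      proof (rule rank_aux[of S n "\<lambda>j k. fs' j (- k)" gs'])
        show "finite S" "n < card S" using fS cS by auto
        show "\<forall>k\<in>S. \<forall>l\<in>S. k \<noteq> l \<longrightarrow> (\<Sum>j<n. fs' j (- k) * gs' j l) = 0"
        proof (intro ballI impI)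
          fix k l assume kl: "k \<in> S" "l \<in> S" "k \<noteq> l"
          obtain c where c: "c \<in> C'" "k = r c" using kl(1) by (auto simp: S_def)
          obtain c' where c': "c' \<in> C'" "l = r c'" using kl(2) by (auto simp: S_def)
          have "- k + l \<notin> H"
          proof
            assume "- k + l \<in> H"
            then have "l \<in> (+) k ` H" by (metis add_minus_cancel image_eqI)
            then have "(+) k ` H = (+) l ` H" by (rule coset_eq[OF Hs(1)])
            then have "c = c'" using r c c' by metis
            then show False using kl c c' by simp
          qed
          then show "(\<Sum>j<n. fs' j (- k) * gs' j l) = 0" using M by simp
        qed
        show "\<forall>k\<in>S. (\<Sum>j<n. fs' j (- k) * gs' j k) \<noteq> 0"
          using M r sgH(1) by (auto simp: S_def)
      qed
    qed
    define U where "U = \<Union>C"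
    have Uc: "compact U" using finC cosH by (auto simp: U_def C_def intro!: compact_Union)
    have Uo: "open U" using cosH by (auto simp: U_def C_def)
    have Ucl: "closed U" using Uc by (rule compact_imp_closed)
    have suppU: "f y \<noteq> 0 \<Longrightarrow> y \<in> U" for y
    proof -
      assume "f y \<noteq> 0"
      moreover have "y \<in> (+) y ` H" using sgH(1) by (metis add.right_neutral image_eqI)
      ultimately show "y \<in> U" by (auto simp: U_def C_def)
    qed
    have fCc: "Cc f" using Cc_intro[OF fc Uc] suppU by blast
    have A1: "\<forall>i<m. Cc (\<lambda>x. fs i x * indicator U x) \<and> continuous_on H (gs i)"
      proof (intro allI impI conjI)
        fix i assume i: "i < m"
        show "continuous_on H (gs i)" using m i by (auto simp: C0_def intro: continuous_on_subset)
        have "continuous_on UNIV (\<lambda>x. fs i x * indicator U x)"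
          using ind_cont[OF Uo Ucl] m i by (auto simp: C0_def intro: continuous_on_subset)
        then show "Cc (\<lambda>x. fs i x * indicator U x)"
          by (rule Cc_intro[OF _ Uc]) (auto simp: indicator_def)
      qed
    have A2: "\<forall>x. \<forall>k\<in>H. f (x + k) = (\<Sum>i<m. fs i x * indicator U x * gs i k)"
      proof (intro allI ballI)
        fix x k assume k: "k \<in> H"
        have e: "f (x + k) = (\<Sum>i<m. fs i x * gs i k)" using spec[OF spec[OF e1, of x], of k] k by simp
        show "f (x + k) = (\<Sum>i<m. fs i x * indicator U x * gs i k)"
        proof (cases "x \<in> U")
          case True then show ?thesis using e by simp
        next
          case False
          have "f (x + k) = 0"
          proof (rule ccontr)
            assume "f (x + k) \<noteq> 0"
            then have "(+) (x + k) ` H \<in> C" by (auto simp: C_def)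
            moreover have "x = (x + k) + - k" by (simp add: add.assoc)
            then have "x \<in> (+) (x + k) ` H" using sgH(3)[OF k] by (rule image_eqI)
            ultimately show False using False by (auto simp: U_def)
          qed
          then show ?thesis using False by simp
        qed
      qed
    show "PG f" unfolding PG_def
      apply (rule conjI[OF fCc], rule exI[of _ H], rule conjI[OF assms(2)], rule exI[of _ m],
          rule exI[of _ "\<lambda>i x. fs i x * indicator U x"], rule exI[of _ gs])
      using A1 A2 by simp
  qed
qed

end
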